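(* $\mathfrak{L}(\mathrm{rtDBVA}(1))\subsetneq\mathfrak{L}(\mathrm{rtDBVA}(2))$.
   Context: $\mathfrak{L}(A)$ denotes the class of languages recognized by machines of type $A$. A real-time deterministic blind vector automaton of dimension $k$ ($\mathrm{rtDBVA}(k)$) is a 6-tuple $(Q,\Sigma,\delta,q_0,Q_a,v)$ with finite state set $Q$, initial state $q_0$, accept states $Q_a$, initial row vector $v\in\mathbb{Q}^k$ (freely chosen), and $\delta:Q\times(\Sigma\cup\{\cent,\$\})\to Q\times S$, $S$ the set of $k\times k$ rational matrices; the input $w$ is read as $\cent w\$$ left to right, one symbol per step, and $\delta(q,\sigma)=(q',M)$ means that in state $q$ reading $\sigma$ the machine goes to $q'$ and multiplies its row vector on the right by $M$. The input is accepted iff after processing $\$$ the state is in $Q_a$ and the first vector entry equals $1$. *)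

theory Defs
  imports "Jordan_Normal_Form.Matrix"
begin

datatype 'a tsym = Cent | Dollar | Sym 'a

record 'a rtdbva =
  states :: "nat set"
  init_state :: nat
  acc_states :: "nat set"
  trans :: "nat \<Rightarrow> 'a tsym \<Rightarrow> nat \<times> rat mat"
  init_vec :: "rat vec"

definition wf_rtdbva :: "nat \<Rightarrow> 'a set \<Rightarrow> 'a rtdbva \<Rightarrow> bool" where
  "wf_rtdbva k Alph M \<longleftrightarrow>
     finite (states M) \<and> init_state M \<in> states M \<and> acc_states M \<subseteq> states M \<and>
     init_vec M \<in> carrier_vec k \<and>
     (\<forall>q \<in> states M. \<forall>\<sigma> \<in> Sym ` Alph \<union> {Cent, Dollar}.
        fst (trans M q \<sigma>) \<in> states M \<and> snd (trans M q \<sigma>) \<in> carrier_mat k k)"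

definition vec_mat_mult :: "rat vec \<Rightarrow> rat mat \<Rightarrow> rat vec" where
  "vec_mat_mult v A = vec (dim_col A) (\<lambda>j. v \<bullet> col A j)"

fun run :: "'a rtdbva \<Rightarrow> nat \<times> rat vec \<Rightarrow> 'a tsym list \<Rightarrow> nat \<times> rat vec" where
  "run M c [] = c"
| "run M (q, v) (\<sigma> # xs) = run M (fst (trans M q \<sigma>), vec_mat_mult v (snd (trans M q \<sigma>))) xs"

definition accepts :: "'a rtdbva \<Rightarrow> 'a list \<Rightarrow> bool" where
  "accepts M w \<longleftrightarrow>
     (let c = run M (init_state M, init_vec M) ([Cent] @ map Sym w @ [Dollar])
      in fst c \<in> acc_states M \<and> snd c $ 0 = 1)"

definition lang :: "'a set \<Rightarrow> 'a rtdbva \<Rightarrow> 'a list set" where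
  "lang Alph M = {w \<in> lists Alph. accepts M w}"

definition rtDBVA_langs :: "nat \<Rightarrow> 'a set \<Rightarrow> 'a list set set" where
  "rtDBVA_langs k Alph = {L. \<exists>M. wf_rtdbva k Alph M \<and> L = lang Alph M}"

end

theory Submission
  imports Defs
begin

fun st :: "'a rtdbva \<Rightarrow> nat \<Rightarrow> 'a tsym list \<Rightarrow> nat" where
  "st M q [] = q"
| "st M q (s # xs) = st M (fst (trans M q s)) xs"

fun P :: "'a rtdbva \<Rightarrow> nat \<Rightarrow> 'a tsym list \<Rightarrow> rat" where
  "P M q [] = 1"
| "P M q (s # xs) = snd (trans M q s) $$ (0,0) * P M (fst (trans M q s)) xs"

lemma st_app: "st M q (xs @ ys) = st M (st M q xs) ys"
  by (induction xs arbitrary: q) auto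

lemma P_app: "P M q (xs @ ys) = P M q xs * P M (st M q xs) ys"
  by (induction xs arbitrary: q) auto

lemma run_fst: "fst (run M (q,v) xs) = st M q xs"
  by (induction xs arbitrary: q v) auto

lemma vmm1:
  assumes "dim_vec v = 1" "A \<in> carrier_mat 1 1"
  shows "dim_vec (vec_mat_mult v A) = 1 \<and> vec_mat_mult v A $ 0 = v $ 0 * A $$ (0,0)"
  using assms by (auto simp: vec_mat_mult_def scalar_prod_def col_def)

lemma run1:
  assumes "wf_rtdbva 1 Alph M" "q \<in> states M" "set xs \<subseteq> Sym ` Alph \<union> {Cent, Dollar}"
    "dim_vec v = 1"
  shows "dim_vec (snd (run M (q,v) xs)) = 1 \<and> snd (run M (q,v) xs) $ 0 = v $ 0 * P M q xs"
  using assms(2-4)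
proof (induction xs arbitrary: q v)
  case Nil
  then show ?case by simp
next
  case (Cons s xs)
  have s: "s \<in> Sym ` Alph \<union> {Cent, Dollar}" using Cons.prems by auto
  have t1: "fst (trans M q s) \<in> states M" and t2: "snd (trans M q s) \<in> carrier_mat 1 1"
    using assms(1) Cons.prems(1) s unfolding wf_rtdbva_def by blast+
  note h = vmm1[OF Cons.prems(3) t2]
  have "dim_vec (snd (run M (fst (trans M q s), vec_mat_mult v (snd (trans M q s))) xs)) = 1 \<and>
     snd (run M (fst (trans M q s), vec_mat_mult v (snd (trans M q s))) xs) $ 0
     = vec_mat_mult v (snd (trans M q s)) $ 0 * P M (fst (trans M q s)) xs"
    using Cons.IH[OF t1 _ ] Cons.prems h by auto
  then show ?case using h by simp
qed

lemma acc1: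
  assumes "wf_rtdbva 1 Alph M" "w \<in> lists Alph"
  shows "accepts M w \<longleftrightarrow>
    st M (init_state M) ([Cent] @ map Sym w @ [Dollar]) \<in> acc_states M \<and>
    init_vec M $ 0 * P M (init_state M) ([Cent] @ map Sym w @ [Dollar]) = 1"
proof -
  have "set ([Cent] @ map Sym w @ [Dollar]) \<subseteq> Sym ` Alph \<union> {Cent, Dollar}" using assms(2) by auto
  moreover have "init_state M \<in> states M" "dim_vec (init_vec M) = 1"
    using assms(1) unfolding wf_rtdbva_def by auto
  ultimately show ?thesis using run1[OF assms(1)] run_fst unfolding accepts_def Let_def
    by (metis prod.collapse)
qed


definition emb :: "'a rtdbva \<Rightarrow> 'a rtdbva" where
  "emb M = M\<lparr>trans := (\<lambda>q s. (fst (trans M q s),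
      mat 2 2 (\<lambda>(i,j). if i = 0 \<and> j = 0 then snd (trans M q s) $$ (0,0) else 0))),
     init_vec := vec 2 (\<lambda>i. if i = 0 then init_vec M $ 0 else 0)\<rparr>"

lemma emb_simps[simp]: "states (emb M) = states M" "init_state (emb M) = init_state M"
  "acc_states (emb M) = acc_states M"
  "fst (trans (emb M) q s) = fst (trans M q s)"
  "snd (trans (emb M) q s) = mat 2 2 (\<lambda>(i,j). if i = 0 \<and> j = 0 then snd (trans M q s) $$ (0,0) else 0)"
  "init_vec (emb M) = vec 2 (\<lambda>i. if i = 0 then init_vec M $ 0 else 0)"
  by (auto simp: emb_def)

lemma st_emb: "st (emb M) q xs = st M q xs"
  by (induction xs arbitrary: q) auto

lemma P_emb: "P (emb M) q xs = P M q xs"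
  by (induction xs arbitrary: q) auto

lemma vmm2:
  assumes "dim_vec v = 2"
  shows "dim_vec (vec_mat_mult v (mat 2 2 (\<lambda>(i,j). if i = 0 \<and> j = 0 then a else 0))) = 2 \<and>
    vec_mat_mult v (mat 2 2 (\<lambda>(i,j). if i = 0 \<and> j = 0 then a else 0)) $ 0 = v $ 0 * a"
  using assms by (auto simp: vec_mat_mult_def scalar_prod_def col_def numeral_2_eq_2)

lemma run_emb:
  assumes "dim_vec v = 2"
  shows "dim_vec (snd (run (emb M) (q,v) xs)) = 2 \<and> snd (run (emb M) (q,v) xs) $ 0 = v $ 0 * P M q xs"
  using assms
proof (induction xs arbitrary: q v)
  case Nil
  then show ?case by simp
next
  case (Cons s xs)
  note h = vmm2[OF Cons.prems, of "snd (trans M q s) $$ (0,0)"]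
  show ?case using Cons.IH[OF conjunct1[OF h]] h by simp
qed

lemma part1:
  assumes "finite Alph"
  shows "rtDBVA_langs 1 Alph \<subseteq> rtDBVA_langs 2 Alph"
proof
  fix L assume "L \<in> rtDBVA_langs 1 Alph"
  then obtain M where M: "wf_rtdbva 1 Alph M" and L: "L = lang Alph M"
    unfolding rtDBVA_langs_def by auto
  have wf2: "wf_rtdbva 2 Alph (emb M)"
    using M unfolding wf_rtdbva_def by auto
  have "lang Alph (emb M) = lang Alph M"
  proof -
    have "accepts (emb M) w = accepts M w" if "w \<in> lists Alph" for w
    proof -
      define tp where "tp = [Cent] @ map Sym w @ [Dollar]"
      have d: "dim_vec (init_vec (emb M)) = 2" by simp
      have z: "init_vec (emb M) $ 0 = init_vec M $ 0" by simp
      have "accepts (emb M) w \<longleftrightarrow> st M (init_state M) tp \<in> acc_states M \<and>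
         init_vec M $ 0 * P M (init_state M) tp = 1"
        unfolding accepts_def Let_def tp_def[symmetric] run_fst emb_simps st_emb
        using run_emb[OF d, of M "init_state M" tp] z by simp
      then show ?thesis using acc1[OF M that] unfolding tp_def by simp
    qed
    then show ?thesis unfolding lang_def by auto
  qed
  then show "L \<in> rtDBVA_langs 2 Alph" using wf2 L unfolding rtDBVA_langs_def by auto
qed


definition Aff :: "rat \<Rightarrow> rat mat" where
  "Aff t = mat 2 2 (\<lambda>(i,j). if i = j then 1 else if i = 1 \<and> j = 0 then t else 0)"

definition Rst :: "rat mat" where
  "Rst = mat 2 2 (\<lambda>(i,j). if i = 1 then 1 else 0)"

fun mf :: "nat tsym \<Rightarrow> rat mat" where
  "mf (Sym 0) = Aff 1"
| "mf (Sym (Suc 0)) = Aff (-1)"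
| "mf (Sym _) = Rst"
| "mf _ = Aff 0"

fun vl :: "rat \<Rightarrow> nat tsym list \<Rightarrow> rat" where
  "vl x [] = x"
| "vl x (Sym 0 # xs) = vl (x + 1) xs"
| "vl x (Sym (Suc 0) # xs) = vl (x - 1) xs"
| "vl x (Sym _ # xs) = vl 1 xs"
| "vl x (_ # xs) = vl x xs"

definition M2 :: "nat rtdbva" where
  "M2 = \<lparr>states = {0}, init_state = 0, acc_states = {0}, trans = (\<lambda>q s. (0, mf s)),
     init_vec = vec 2 (\<lambda>i. 1)\<rparr>"

lemma mf_carrier: "mf s \<in> carrier_mat 2 2"
  by (cases s rule: mf.cases) (auto simp: Aff_def Rst_def)

lemma vmmA:
  assumes "dim_vec v = 2" "v $ 1 = 1"
  shows "dim_vec (vec_mat_mult v (Aff t)) = 2 \<and> vec_mat_mult v (Aff t) $ 1 = 1 \<and>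
    vec_mat_mult v (Aff t) $ 0 = v $ 0 + t"
  using assms by (auto simp: vec_mat_mult_def scalar_prod_def col_def numeral_2_eq_2 Aff_def)

lemma vmmR:
  assumes "dim_vec v = 2" "v $ 1 = 1"
  shows "dim_vec (vec_mat_mult v Rst) = 2 \<and> vec_mat_mult v Rst $ 1 = 1 \<and>
    vec_mat_mult v Rst $ 0 = 1"
  using assms by (auto simp: vec_mat_mult_def scalar_prod_def col_def numeral_2_eq_2 Rst_def)

lemma run2:
  assumes "dim_vec v = 2" "v $ 1 = 1" "v $ 0 = x"
  shows "dim_vec (snd (run M2 (q,v) xs)) = 2 \<and>
    snd (run M2 (q,v) xs) $ 1 = 1 \<and> snd (run M2 (q,v) xs) $ 0 = vl x xs"
  using assms
proof (induction x xs arbitrary: q v rule: vl.induct)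
  case (1 x)
  then show ?case by simp
next
  case (2 x xs)
  note h = vmmA[OF 2(2,3), of 1]
  show ?case using 2(1)[OF conjunct1[OF h]] h 2(4) by (simp add: M2_def)
next
  case (3 x xs)
  note h = vmmA[OF 3(2,3), of "-1"]
  show ?case using 3(1)[OF conjunct1[OF h]] h 3(4) by (simp add: M2_def)
next
  case (4 x v xs)
  note h = vmmR[OF 4(2,3)]
  show ?case using 4(1)[OF conjunct1[OF h]] h 4(4) by (simp add: M2_def)
next
  case ("5_1" x xs)
  note h = vmmA[OF "5_1"(2,3), of 0]
  show ?case using "5_1"(1)[OF conjunct1[OF h]] h "5_1"(4) by (simp add: M2_def)
next
  case ("5_2" x xs)
  note h = vmmA[OF "5_2"(2,3), of 0]
  show ?case using "5_2"(1)[OF conjunct1[OF h]] h "5_2"(4) by (simp add: M2_def)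
qed

lemma st_M2: "st M2 q xs = (if xs = [] then q else 0)"
  by (induction xs arbitrary: q) (auto simp: M2_def)

lemma acc_M2: "accepts M2 w \<longleftrightarrow> vl 1 ([Cent] @ map Sym w @ [Dollar]) = 1"
proof -
  define tp where "tp = [Cent] @ map Sym w @ [Dollar]"
  have a: "dim_vec (init_vec M2) = 2" "init_vec M2 $ 1 = 1" "init_vec M2 $ 0 = 1"
    by (auto simp: M2_def)
  have f: "fst (run M2 (init_state M2, init_vec M2) tp) \<in> acc_states M2"
    unfolding run_fst st_M2 tp_def by (simp add: M2_def)
  have "snd (run M2 (init_state M2, init_vec M2) tp) $ 0 = vl 1 tp"
    using run2[OF a] by blast
  then show ?thesis using f unfolding accepts_def Let_def tp_def by simp
qed

lemma vl_rep0: "vl x (replicate n (Sym 0) @ ys) = vl (x + of_nat n) ys"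
  by (induction n arbitrary: x) (auto simp: algebra_simps)

lemma vl_2[simp]: "vl x (Sym 2 # xs) = vl 1 xs"
  by (simp add: numeral_2_eq_2)

lemma vl_rep1: "vl x (replicate n (Sym (Suc 0)) @ ys) = vl (x - of_nat n) ys"
  by (induction n arbitrary: x) (auto simp: algebra_simps)

lemma wfM2: "wf_rtdbva 2 {0,1,2} M2"
  unfolding wf_rtdbva_def M2_def using mf_carrier by auto


lemma st_in:
  assumes "wf_rtdbva k Alph M" "q \<in> states M" "set xs \<subseteq> Sym ` Alph \<union> {Cent, Dollar}"
  shows "st M q xs \<in> states M"
  using assms(2,3)
proof (induction xs arbitrary: q)
  case Nil then show ?case by simp
next
  case (Cons s xs)
  have "fst (trans M q s) \<in> states M"
    using assms(1) Cons.prems unfolding wf_rtdbva_def by auto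
  then show ?case using Cons by auto
qed

abbreviation Ab :: "nat set" where "Ab \<equiv> {0,1,2}"

lemma M2_c: "accepts M2 (replicate n 0 @ [2])"
  unfolding acc_M2 by (simp add: vl_rep0)

lemma M2_ab: "accepts M2 (replicate n 0 @ replicate k 1) \<longleftrightarrow> n = k"
proof -
  have "[Cent] @ map Sym (replicate n 0 @ replicate k 1) @ [Dollar] =
    Cent # replicate n (Sym 0) @ replicate k (Sym 1) @ [Dollar]" by simp
  then show ?thesis unfolding acc_M2 by (simp add: vl_rep0 vl_rep1)
qed

lemma not1: "lang Ab M2 \<notin> rtDBVA_langs 1 Ab"
proof
  assume "lang Ab M2 \<in> rtDBVA_langs 1 Ab"
  then obtain M where M: "wf_rtdbva 1 Ab M" and L: "lang Ab M2 = lang Ab M"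
    unfolding rtDBVA_langs_def by auto
  have eq: "accepts M w \<longleftrightarrow> accepts M2 w" if "w \<in> lists Ab" for w
    using L that unfolding lang_def by blast
  define q0 where "q0 = init_state M"
  define f where "f k = st M q0 ([Cent] @ replicate k (Sym 0))" for k
  define x where "x k = init_vec M $ 0 * P M q0 ([Cent] @ replicate k (Sym 0))" for k
  have acc: "accepts M (replicate k 0 @ ys) \<longleftrightarrow>
     st M (f k) (map Sym ys @ [Dollar]) \<in> acc_states M \<and> x k * P M (f k) (map Sym ys @ [Dollar]) = 1"
    if "ys \<in> lists Ab" for k ys
  proof -
    have "replicate k 0 @ ys \<in> lists Ab" using that by auto
    moreover have "[Cent] @ map Sym (replicate k 0 @ ys) @ [Dollar] =
       ([Cent] @ replicate k (Sym 0)) @ (map Sym ys @ [Dollar])" by simp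
    ultimately show ?thesis using acc1[OF M] unfolding f_def x_def q0_def
      by (simp add: st_app P_app mult.assoc)
  qed
  have fin: "finite (states M)" and q0s: "q0 \<in> states M" using M unfolding wf_rtdbva_def q0_def by auto
  have fs: "f ` {..card (states M)} \<subseteq> states M"
    unfolding f_def by (intro image_subsetI st_in[OF M q0s]) auto
  have "\<not> inj_on f {..card (states M)}"
  proof
    assume "inj_on f {..card (states M)}"
    from card_inj_on_le[OF this fs fin] show False by simp
  qed
  then obtain n m where nm: "n \<noteq> m" "f n = f m" unfolding inj_on_def by blast
  have c: "[2] \<in> lists Ab" by simp
  have r: "replicate k (0::nat) \<in> lists Ab" for k by (induction k) auto
  have "accepts M (replicate n 0 @ [2])" "accepts M (replicate m 0 @ [2])"
    using eq[of "replicate n 0 @ [2]"] eq[of "replicate m 0 @ [2]"] M2_c r by auto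
  then have "x n * P M (f n) (map Sym [2] @ [Dollar]) = 1" "x m * P M (f n) (map Sym [2] @ [Dollar]) = 1"
    using acc[OF c] nm(2) by auto
  then have xe: "x n = x m"
    by (metis mult_cancel_right mult_zero_left zero_neq_one)
  have b: "replicate n (1::nat) \<in> lists Ab" by auto
  have "replicate n 0 @ replicate n 1 \<in> lists Ab" using r b by simp
  then have "accepts M (replicate n 0 @ replicate n 1)" using eq M2_ab by blast
  then have "accepts M (replicate m 0 @ replicate n 1)"
    using acc[OF b] nm(2) xe by auto
  moreover have "replicate m 0 @ replicate n 1 \<in> lists Ab" using r b by simp
  ultimately have "accepts M2 (replicate m 0 @ replicate n 1)" using eq by blast
  then show False using M2_ab nm(1) by auto
qed

theorem theorem11:
  shows "(\<forall>Alph :: 'a set. finite Alph \<longrightarrow> rtDBVA_langs 1 Alph \<subseteq> rtDBVA_langs 2 Alph) \<and>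
         (\<exists>Alph :: nat set. finite Alph \<and> rtDBVA_langs 1 Alph \<subset> rtDBVA_langs 2 Alph)"
proof (intro conjI allI impI)
  fix Alph :: "'a set" assume "finite Alph"
  then show "rtDBVA_langs 1 Alph \<subseteq> rtDBVA_langs 2 Alph" by (rule part1)
next
  have "lang Ab M2 \<in> rtDBVA_langs 2 Ab" using wfM2 unfolding rtDBVA_langs_def by auto
  then show "\<exists>Alph :: nat set. finite Alph \<and> rtDBVA_langs 1 Alph \<subset> rtDBVA_langs 2 Alph"
    using part1[of Ab] not1 by (intro exI[of _ Ab]) auto
qed

end
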